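(* There is an interpretation of $L(I)$ in $W(I)$, for which the co-ordinate map from the set of finite unions of closed intervals of $I$ to (finite subsets of $I$)$^2$ is given by $A \mapsto (l(A),r(A))$, the pair consisting of the set of left endpoints and the set of right endpoints of $A$.
   Context: Let $I$ be a dense linear order with a left endpoint $0$ and no right endpoint. $W(I)$ is the structure in the signature $\{\cup,\cap,\bot,\{0\},\min,\max,\mathrm{ips}\}$ whose universe is the collection of finite subsets of $I$, with $\cup,\cap$ union and intersection, $\bot$ the empty set, the constant $\{0\}$ interpreted as the singleton of the left endpoint, $\min$ and $\max$ sending a nonempty finite set to the singleton of its minimum (resp. maximum) and fixing $\emptyset$, and $\mathrm{ips}$ the binary function $\mathrm{ips}(A,B)=\{i\in A : \text{the successor of } i \text{ in } A \text{ (in the induced order) exists and lies in } B\}$. $L(I)$ is the structure in the signature $\{\cup,\cap,\bot,\{0\},\min,\max,l,r\}$ whose universe is the collection of finite unions of closed intervals of $I$ (closed intervals being sets of the form $[i,j]$, $[i,+\infty)$, $(-\infty,j]$), with $\cup,\cap$ union and intersection, $\bot$ the empty set, $\{0\}$ the singleton of the left endpoint, $\min$ and $\max$ sending a set to the singleton of its minimum (resp. maximum), with $\min(\emptyset)=\max(\emptyset)=\emptyset$ and $\max(A)=\emptyset$ for unbounded $A$, and $l$, $r$ sending a set to the set of its left (resp. right) endpoints. *)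

theory Defs
  imports Main
begin

text \<open>The dense linear order I with left endpoint 0 and no right endpoint is modelled
by a type of class dense_linorder, order_bot, no_top; the left endpoint 0 is bot.\<close>

definition ips :: "'a::linorder set \<Rightarrow> 'a set \<Rightarrow> 'a set" where
  "ips A B = {i \<in> A. \<exists>j\<in>A. i < j \<and> (\<forall>k\<in>A. i < k \<longrightarrow> j \<le> k) \<and> j \<in> B}"

definition Wmin :: "'a::linorder set \<Rightarrow> 'a set" where
  "Wmin S = (if S = {} then {} else {Min S})"

definition Wmax :: "'a::linorder set \<Rightarrow> 'a set" where
  "Wmax S = (if S = {} then {} else {Max S})"

datatype wterm = WVar nat | WUn wterm wterm | WInt wterm wterm | WBot | WZero
  | WMin wterm | WMax wterm | WIps wterm wterm

datatype wform = WEq wterm wterm | WNeg wform | WConj wform wform | WEx nat wform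

fun weval :: "(nat \<Rightarrow> 'a::{linorder,order_bot} set) \<Rightarrow> wterm \<Rightarrow> 'a set" where
  "weval \<sigma> (WVar n) = \<sigma> n"
| "weval \<sigma> (WUn s t) = weval \<sigma> s \<union> weval \<sigma> t"
| "weval \<sigma> (WInt s t) = weval \<sigma> s \<inter> weval \<sigma> t"
| "weval \<sigma> WBot = {}"
| "weval \<sigma> WZero = {bot}"
| "weval \<sigma> (WMin t) = Wmin (weval \<sigma> t)"
| "weval \<sigma> (WMax t) = Wmax (weval \<sigma> t)"
| "weval \<sigma> (WIps s t) = ips (weval \<sigma> s) (weval \<sigma> t)"

text \<open>Satisfaction in W(I): quantifiers range over the universe, the finite subsets.\<close>
fun wsat :: "(nat \<Rightarrow> 'a::{linorder,order_bot} set) \<Rightarrow> wform \<Rightarrow> bool" where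
  "wsat \<sigma> (WEq s t) = (weval \<sigma> s = weval \<sigma> t)"
| "wsat \<sigma> (WNeg \<phi>) = (\<not> wsat \<sigma> \<phi>)"
| "wsat \<sigma> (WConj \<phi> \<psi>) = (wsat \<sigma> \<phi> \<and> wsat \<sigma> \<psi>)"
| "wsat \<sigma> (WEx n \<phi>) = (\<exists>X. finite X \<and> wsat (\<sigma>(n := X)) \<phi>)"

text \<open>A relation R on W(I) of arity n (tuples as lists) is (parameter-free) definable
if some formula with free variables among 0..n-1 defines it.\<close>
definition W_definable :: "nat \<Rightarrow> 'a::{linorder,order_bot} set list set \<Rightarrow> bool" where
  "W_definable n R \<longleftrightarrow>
     R \<subseteq> {xs. length xs = n \<and> (\<forall>X\<in>set xs. finite X)} \<and>
     (\<exists>\<phi>. \<forall>\<sigma>. (\<forall>i. finite (\<sigma> i)) \<longrightarrow> (wsat \<sigma> \<phi> \<longleftrightarrow> map \<sigma> [0..<n] \<in> R))"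

definition closed_interval :: "'a::linorder set \<Rightarrow> bool" where
  "closed_interval S \<longleftrightarrow> (\<exists>i j. S = {i..j}) \<or> (\<exists>i. S = {i..}) \<or> (\<exists>j. S = {..j})"

definition Lset :: "'a::linorder set \<Rightarrow> bool" where
  "Lset A \<longleftrightarrow> (\<exists>F. finite F \<and> (\<forall>S\<in>F. closed_interval S) \<and> A = \<Union>F)"

text \<open>Left / right endpoints (of the connected components) of a set.\<close>
definition lend :: "'a::{linorder,order_bot} set \<Rightarrow> 'a set" where
  "lend A = {i \<in> A. i = bot \<or> (\<exists>j<i. {j<..<i} \<inter> A = {})}"

definition rend :: "'a::linorder set \<Rightarrow> 'a set" where
  "rend A = {i \<in> A. \<exists>j>i. {i<..<j} \<inter> A = {}}"

definition Lmin :: "'a::linorder set \<Rightarrow> 'a set" where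
  "Lmin A = (if A = {} then {} else {LEAST x. x \<in> A})"

definition Lmax :: "'a::linorder set \<Rightarrow> 'a set" where
  "Lmax A = (if A = {} \<or> \<not> bdd_above A then {} else {GREATEST x. x \<in> A})"

text \<open>c A is the tuple of co-ordinates (in W(I)) of the element A of L(I). The domain,
the pull-back of equality, and the graphs of all operations of L(I) must be
parameter-free definable in W(I).\<close>
definition interprets_L_in_W :: "('a::{linorder,order_bot} set \<Rightarrow> 'a set list) \<Rightarrow> nat \<Rightarrow> bool" where
  "interprets_L_in_W c k \<longleftrightarrow>
     (\<forall>A. Lset A \<longrightarrow> length (c A) = k) \<and>
     W_definable k {c A | A. Lset A} \<and>
     W_definable (2*k) {c A @ c B | A B. Lset A \<and> Lset B \<and> A = B} \<and>
     W_definable (3*k) {c A @ c B @ c (A \<union> B) | A B. Lset A \<and> Lset B} \<and>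
     W_definable (3*k) {c A @ c B @ c (A \<inter> B) | A B. Lset A \<and> Lset B} \<and>
     W_definable k {c {}} \<and>
     W_definable k {c {bot}} \<and>
     W_definable (2*k) {c A @ c (Lmin A) | A. Lset A} \<and>
     W_definable (2*k) {c A @ c (Lmax A) | A. Lset A} \<and>
     W_definable (2*k) {c A @ c (lend A) | A. Lset A} \<and>
     W_definable (2*k) {c A @ c (rend A) | A. Lset A}"

end

theory Submission
  imports Defs
begin


lemma avoid:
  fixes E :: "'a::dense_linorder set"
  assumes "finite E" "x \<notin> E" "a0 < x" "x < b0"
  shows "\<exists>a b. a0 \<le> a \<and> a < x \<and> x < b \<and> b \<le> b0 \<and> (\<forall>e\<in>E. \<not>(a<e \<and> e<b))"
  using assms
proof (induction E rule: finite_induct)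
  case empty
  then show ?case by (intro exI[of _ a0] exI[of _ b0]) auto
next
  case (insert e E)
  then obtain a b where ab: "a0 \<le> a" "a < x" "x < b" "b \<le> b0" "\<forall>e\<in>E. \<not>(a<e \<and> e<b)" by auto
  have "e \<noteq> x" using insert by auto
  show ?case
  proof (cases "a < e \<and> e < b")
    case True
    show ?thesis
    proof (cases "e < x")
      case True
      then show ?thesis using ab \<open>a < e \<and> e < b\<close>
        by (intro exI[of _ e] exI[of _ b]) auto
    next
      case False
      then have "x < e" using \<open>e \<noteq> x\<close> by auto
      then show ?thesis using ab \<open>a < e \<and> e < b\<close>
        by (intro exI[of _ a] exI[of _ e]) auto
    qed
  next
    case False
    then show ?thesis using ab by (intro exI[of _ a] exI[of _ b]) auto
  qed
qed

definition unif :: "'a::linorder set \<Rightarrow> 'a set \<Rightarrow> bool" where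
  "unif E A \<longleftrightarrow> (\<forall>a b. (\<forall>e\<in>E. \<not>(a<e \<and> e<b)) \<longrightarrow> ({a<..<b} \<subseteq> A \<or> {a<..<b} \<inter> A = {}))"

definition clos :: "'a::linorder set \<Rightarrow> 'a set \<Rightarrow> bool" where
  "clos E A \<longleftrightarrow> (\<forall>a b. a<b \<longrightarrow> (\<forall>e\<in>E. \<not>(a<e \<and> e<b)) \<longrightarrow> {a<..<b} \<subseteq> A \<longrightarrow> a\<in>A \<and> b\<in>A)"

lemma unif_mono: "unif E A \<Longrightarrow> E \<subseteq> E' \<Longrightarrow> unif E' A"
  unfolding unif_def by blast

lemma clos_mono: "clos E A \<Longrightarrow> E \<subseteq> E' \<Longrightarrow> clos E' A"
  unfolding clos_def by blast

lemma unif_Un: "unif E A \<Longrightarrow> unif E B \<Longrightarrow> unif E (A \<union> B)"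
  unfolding unif_def by blast

lemma clos_Un: "unif E A \<Longrightarrow> clos E A \<Longrightarrow> clos E B \<Longrightarrow> unif E B \<Longrightarrow> clos E (A \<union> B)"
  unfolding clos_def unif_def by blast

lemma left_le:
  fixes a b i :: "'a::dense_linorder"
  assumes "a < b" "\<forall>c. a < c \<and> c < b \<longrightarrow> i \<le> c" shows "i \<le> a"
proof (rule ccontr)
  assume "\<not> i \<le> a"
  then have "a < min i b" using assms by auto
  then obtain c where "a < c" "c < min i b" using dense by blast
  then show False using assms by auto
qed

lemma right_le:
  fixes a b j :: "'a::dense_linorder"
  assumes "a < b" "\<forall>c. a < c \<and> c < b \<longrightarrow> c \<le> j" shows "b \<le> j"
proof (rule ccontr)
  assume "\<not> b \<le> j"
  then have "max j a < b" using assms by auto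
  then obtain c where "max j a < c" "c < b" using dense by blast
  then show False using assms by auto
qed

lemma interval_good:
  fixes S :: "'a::dense_linorder set"
  assumes "closed_interval S"
  shows "\<exists>E. finite E \<and> unif E S \<and> clos E S"
  using assms unfolding closed_interval_def
proof (elim disjE exE)
  fix i j assume S: "S = {i..j}"
  have "unif {i,j} S" unfolding unif_def S
  proof (intro allI impI)
    fix a b assume h: "\<forall>e\<in>{i,j}. \<not> (a < e \<and> e < b)"
    show "{a<..<b} \<subseteq> {i..j} \<or> {a<..<b} \<inter> {i..j} = {}"
    proof (rule ccontr)
      assume "\<not> ?thesis"
      then obtain c d where "c \<in> {a<..<b}" "c \<in> {i..j}" "d \<in> {a<..<b}" "d \<notin> {i..j}" by blast
      then show False using h by (auto simp: not_le)
    qed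
  qed
  moreover have "clos {i,j} S" unfolding clos_def S
  proof (intro allI impI)
    fix a b assume h: "a < b" "{a<..<b} \<subseteq> {i..j}"
    have "i \<le> a" by (rule left_le[OF h(1)]) (use h(2) in auto)
    moreover have "b \<le> j" by (rule right_le[OF h(1)]) (use h(2) in auto)
    ultimately show "a \<in> {i..j} \<and> b \<in> {i..j}" using h(1) by auto
  qed
  ultimately show ?thesis by (intro exI[of _ "{i,j}"]) auto
next
  fix i assume S: "S = {i..}"
  have "unif {i} S" unfolding unif_def S
  proof (intro allI impI)
    fix a b assume h: "\<forall>e\<in>{i}. \<not> (a < e \<and> e < b)"
    show "{a<..<b} \<subseteq> {i..} \<or> {a<..<b} \<inter> {i..} = {}"
    proof (rule ccontr)
      assume "\<not> ?thesis"
      then obtain c d where "c \<in> {a<..<b}" "c \<in> {i..}" "d \<in> {a<..<b}" "d \<notin> {i..}" by blast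
      then show False using h by (auto simp: not_le)
    qed
  qed
  moreover have "clos {i} S" unfolding clos_def S
  proof (intro allI impI)
    fix a b assume h: "a < b" "{a<..<b} \<subseteq> {i..}"
    have "i \<le> a" by (rule left_le[OF h(1)]) (use h(2) in auto)
    then show "a \<in> {i..} \<and> b \<in> {i..}" using h(1) by auto
  qed
  ultimately show ?thesis by (intro exI[of _ "{i}"]) auto
next
  fix j assume S: "S = {..j}"
  have "unif {j} S" unfolding unif_def S
  proof (intro allI impI)
    fix a b assume h: "\<forall>e\<in>{j}. \<not> (a < e \<and> e < b)"
    show "{a<..<b} \<subseteq> {..j} \<or> {a<..<b} \<inter> {..j} = {}"
    proof (rule ccontr)
      assume "\<not> ?thesis"
      then obtain c d where "c \<in> {a<..<b}" "c \<in> {..j}" "d \<in> {a<..<b}" "d \<notin> {..j}" by blast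
      then show False using h by (auto simp: not_le)
    qed
  qed
  moreover have "clos {j} S" unfolding clos_def S
  proof (intro allI impI)
    fix a b assume h: "a < b" "{a<..<b} \<subseteq> {..j}"
    have "b \<le> j" by (rule right_le[OF h(1)]) (use h(2) in auto)
    then show "a \<in> {..j} \<and> b \<in> {..j}" using h(1) by auto
  qed
  ultimately show ?thesis by (intro exI[of _ "{j}"]) auto
qed

lemma Lset_good:
  fixes A :: "'a::{dense_linorder,order_bot} set"
  assumes "Lset A"
  shows "\<exists>E. finite E \<and> bot \<in> E \<and> unif E A \<and> clos E A"
proof -
  obtain F where F: "finite F" "\<forall>S\<in>F. closed_interval S" "A = \<Union>F"
    using assms unfolding Lset_def by blast
  have "\<exists>E. finite E \<and> bot \<in> E \<and> unif E (\<Union>F) \<and> clos E (\<Union>F)"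
    using F(1,2)
  proof (induction F rule: finite_induct)
    case empty
    then show ?case by (intro exI[of _ "{bot}"]) (auto simp: unif_def clos_def)
  next
    case (insert S F)
    then obtain E where E: "finite E" "bot \<in> E" "unif E (\<Union>F)" "clos E (\<Union>F)" by auto
    obtain ES where ES: "finite ES" "unif ES S" "clos ES S" using interval_good insert by blast
    have u1: "unif (E \<union> ES) (\<Union>F)" "unif (E \<union> ES) S"
      using E ES unif_mono by blast+
    have c1: "clos (E \<union> ES) (\<Union>F)" "clos (E \<union> ES) S"
      using E ES clos_mono by blast+
    have "\<Union>(insert S F) = \<Union>F \<union> S" by auto
    then show ?case using u1 c1 E ES unif_Un clos_Un
      by (intro exI[of _ "E \<union> ES"]) auto
  qed
  then show ?thesis using F by simp
qed


lemma lend_sub_E: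
  fixes A :: "'a::{dense_linorder,no_top,order_bot} set"
  assumes "finite E" "bot \<in> E" "unif E A" "i \<in> lend A"
  shows "i \<in> E"
proof (rule ccontr)
  assume iE: "i \<notin> E"
  then have "i \<noteq> bot" using assms by auto
  then obtain j where j: "j < i" "{j<..<i} \<inter> A = {}" "i \<in> A" using assms(4) unfolding lend_def by auto
  obtain b0 where "i < b0" using gt_ex by blast
  obtain a b where ab: "j \<le> a" "a < i" "i < b" "\<forall>e\<in>E. \<not>(a<e \<and> e<b)"
    using avoid[OF assms(1) iE j(1) \<open>i < b0\<close>] by blast
  have "i \<in> {a<..<b}" using ab by auto
  have "{a<..<b} \<subseteq> A \<or> {a<..<b} \<inter> A = {}" using assms(3) ab(4) unfolding unif_def by blast
  then have sub: "{a<..<b} \<subseteq> A" using \<open>i \<in> {a<..<b}\<close> j(3) by blast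
  obtain c where "a < c" "c < i" using ab dense by blast
  then have "c \<in> {a<..<b}" "c \<in> {j<..<i}" using ab by auto
  then show False using sub j(2) by blast
qed

lemma rend_sub_E:
  fixes A :: "'a::{dense_linorder,no_top,order_bot} set"
  assumes "finite E" "bot \<in> E" "unif E A" "i \<in> rend A"
  shows "i \<in> E"
proof (rule ccontr)
  assume iE: "i \<notin> E"
  then have "i \<noteq> bot" using assms by auto
  then have "bot < i" using bot_less by blast
  obtain j where j: "i < j" "{i<..<j} \<inter> A = {}" "i \<in> A" using assms(4) unfolding rend_def by auto
  obtain a b where ab: "bot \<le> a" "a < i" "i < b" "b \<le> j" "\<forall>e\<in>E. \<not>(a<e \<and> e<b)"
    using avoid[OF assms(1) iE \<open>bot < i\<close> j(1)] by blast
  have "i \<in> {a<..<b}" using ab by auto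
  have "{a<..<b} \<subseteq> A \<or> {a<..<b} \<inter> A = {}" using assms(3) ab(5) unfolding unif_def by blast
  then have sub: "{a<..<b} \<subseteq> A" using \<open>i \<in> {a<..<b}\<close> j(3) by blast
  obtain c where "i < c" "c < b" using ab dense by blast
  then have "c \<in> {a<..<b}" "c \<in> {i<..<j}" using ab by auto
  then show False using sub j(2) by blast
qed

lemma Lset_finite:
  fixes A :: "'a::{dense_linorder,no_top,order_bot} set"
  assumes "Lset A" shows "finite (lend A)" "finite (rend A)"
proof -
  obtain E where E: "finite E" "bot \<in> E" "unif E A" "clos E A" using Lset_good[OF assms] by blast
  have "lend A \<subseteq> E" "rend A \<subseteq> E" using lend_sub_E[OF E(1-3)] rend_sub_E[OF E(1-3)] by auto
  then show "finite (lend A)" "finite (rend A)" using E(1) finite_subset by auto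
qed

definition memS :: "'a::linorder \<Rightarrow> 'a set \<Rightarrow> 'a set \<Rightarrow> bool" where
  "memS x L R \<longleftrightarrow> x \<in> L \<union> R \<or> (\<exists>p\<in>L. p \<notin> R \<and> p < x \<and> (\<forall>u\<in>L \<union> R. \<not>(p<u \<and> u<x)))"

definition Sset :: "'a::linorder set \<Rightarrow> 'a set \<Rightarrow> 'a set" where
  "Sset L R = {x. memS x L R}"

lemma lend_sub: "lend A \<subseteq> A" and rend_sub: "rend A \<subseteq> A"
  unfolding lend_def rend_def by auto

lemma K2_sub:
  fixes A :: "'a::{dense_linorder,no_top,order_bot} set"
  assumes fin: "finite E" and bE: "bot \<in> E" and un: "unif E A" and cl: "clos E A"
    and m: "memS x (lend A) (rend A)"
  shows "x \<in> A"
proof (rule ccontr)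
  assume nx: "x \<notin> A"
  then have "x \<notin> lend A \<union> rend A" using lend_sub rend_sub by blast
  then obtain p where p: "p \<in> lend A" "p \<notin> rend A" "p < x"
     and hno: "\<forall>u\<in>lend A \<union> rend A. \<not>(p<u \<and> u<x)"
    using m unfolding memS_def by blast
  have pA: "p \<in> A" using p lend_sub by blast
  define C where "C = {y \<in> insert p E. p \<le> y \<and> y < x \<and> {p..y} \<subseteq> A}"
  have fC: "finite C" using fin unfolding C_def by auto
  have pC: "p \<in> C" using pA p unfolding C_def by auto
  define r where "r = Max C"
  have rC: "r \<in> C" using fC pC Max_in unfolding r_def by blast
  have rmax: "\<And>y. y \<in> C \<Longrightarrow> y \<le> r" using fC unfolding r_def by auto
  have r: "p \<le> r" "r < x" "{p..r} \<subseteq> A" using rC unfolding C_def by auto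
  define D where "D = {e \<in> insert x E. r < e}"
  have fD: "finite D" using fin unfolding D_def by auto
  have xD: "x \<in> D" using r unfolding D_def by auto
  define e2 where "e2 = Min D"
  have e2D: "e2 \<in> D" using fD xD Min_in unfolding e2_def by blast
  have e2min: "\<And>y. y \<in> D \<Longrightarrow> e2 \<le> y" using fD unfolding e2_def by auto
  have e2: "r < e2" "e2 \<le> x" "e2 \<in> insert x E" using e2D e2min[OF xD] unfolding D_def by auto
  have noE: "\<forall>e\<in>E. \<not>(r<e \<and> e<e2)"
  proof (intro ballI notI)
    fix e assume "e \<in> E" "r < e \<and> e < e2"
    then have "e \<in> D" unfolding D_def by auto
    then show False using e2min \<open>r < e \<and> e < e2\<close> by force
  qed
  have "{r<..<e2} \<subseteq> A \<or> {r<..<e2} \<inter> A = {}" using un noE unfolding unif_def by blast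
  then show False
  proof
    assume sub: "{r<..<e2} \<subseteq> A"
    then have "r \<in> A \<and> e2 \<in> A" using cl noE e2(1) unfolding clos_def by blast
    then have "e2 \<noteq> x" using nx by auto
    then have "e2 \<in> E" "e2 < x" using e2 by auto
    have "{p..e2} \<subseteq> A"
    proof
      fix y assume "y \<in> {p..e2}"
      show "y \<in> A"
      proof (cases "y \<le> r")
        case True
        then show ?thesis using r \<open>y \<in> {p..e2}\<close> by auto
      next
        case False
        show ?thesis
        proof (cases "y = e2")
          case True
          then show ?thesis using \<open>r \<in> A \<and> e2 \<in> A\<close> by simp
        next
          case False
          then have "y \<in> {r<..<e2}" using \<open>\<not> y \<le> r\<close> \<open>y \<in> {p..e2}\<close> by auto
          then show ?thesis using sub by blast
        qed
      qed
    qed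
    then have "e2 \<in> C" using \<open>e2 \<in> E\<close> \<open>e2 < x\<close> r e2 unfolding C_def by auto
    then show False using rmax e2(1) by force
  next
    assume "{r<..<e2} \<inter> A = {}"
    moreover have "r \<in> A" using r by auto
    ultimately have "r \<in> rend A" unfolding rend_def using e2(1) by auto
    then have "r \<noteq> p" using p by auto
    then show False using hno \<open>r \<in> rend A\<close> r by auto
  qed
qed

lemma K2_sup:
  fixes A :: "'a::{dense_linorder,no_top,order_bot} set"
  assumes fin: "finite E" and bE: "bot \<in> E" and un: "unif E A" and cl: "clos E A"
    and xA: "x \<in> A"
  shows "memS x (lend A) (rend A)"
proof (cases "x \<in> lend A \<union> rend A")
  case True
  then show ?thesis unfolding memS_def by blast
next
  case False
  define C where "C = {y \<in> insert x E. y \<le> x \<and> {y..x} \<subseteq> A}"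
  have fC: "finite C" using fin unfolding C_def by auto
  have xC: "x \<in> C" using xA unfolding C_def by auto
  define l where "l = Min C"
  have lC: "l \<in> C" using fC xC Min_in unfolding l_def by blast
  have lmin: "\<And>y. y \<in> C \<Longrightarrow> l \<le> y" using fC unfolding l_def by auto
  have l: "l \<le> x" "{l..x} \<subseteq> A" using lC unfolding C_def by auto
  have lA: "l \<in> A" using l by auto
  have lL: "l \<in> lend A"
  proof (cases "l = bot")
    case True
    then show ?thesis using lA unfolding lend_def by auto
  next
    case False
    then have "bot < l" using bot_less by blast
    define D where "D = {e \<in> E. e < l}"
    have fD: "finite D" using fin unfolding D_def by auto
    have bD: "bot \<in> D" using bE \<open>bot < l\<close> unfolding D_def by auto
    define e1 where "e1 = Max D"
    have e1D: "e1 \<in> D" using fD bD Max_in unfolding e1_def by blast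
    have e1max: "\<And>y. y \<in> D \<Longrightarrow> y \<le> e1" using fD unfolding e1_def by auto
    have e1: "e1 < l" "e1 \<in> E" using e1D unfolding D_def by auto
    have noE: "\<forall>e\<in>E. \<not>(e1<e \<and> e<l)"
    proof (intro ballI notI)
      fix e assume "e \<in> E" "e1 < e \<and> e < l"
      then have "e \<in> D" unfolding D_def by auto
      then show False using e1max \<open>e1 < e \<and> e < l\<close> by force
    qed
    have "{e1<..<l} \<subseteq> A \<or> {e1<..<l} \<inter> A = {}" using un noE unfolding unif_def by blast
    then show ?thesis
    proof
      assume sub: "{e1<..<l} \<subseteq> A"
      then have "e1 \<in> A" using cl noE e1(1) unfolding clos_def by blast
      have "{e1..x} \<subseteq> A"
      proof
        fix y assume "y \<in> {e1..x}"
        show "y \<in> A"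
        proof (cases "y < l")
          case False
          then show ?thesis using l \<open>y \<in> {e1..x}\<close> by auto
        next
          case True
          show ?thesis
          proof (cases "y = e1")
            case True
            then show ?thesis using \<open>e1 \<in> A\<close> by simp
          next
            case False
            then have "y \<in> {e1<..<l}" using \<open>y < l\<close> \<open>y \<in> {e1..x}\<close> by auto
            then show ?thesis using sub by blast
          qed
        qed
      qed
      then have "e1 \<in> C" using e1 l unfolding C_def by auto
      then show ?thesis using lmin e1(1) by force
    next
      assume "{e1<..<l} \<inter> A = {}"
      then show ?thesis using lA e1 unfolding lend_def by auto
    qed
  qed
  have "l \<noteq> x" using False lL by auto
  then have lx: "l < x" using l by auto
  have lR: "l \<notin> rend A"
  proof
    assume "l \<in> rend A"
    then obtain j where "l < j" "{l<..<j} \<inter> A = {}" unfolding rend_def by auto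
    moreover obtain c where "l < c" "c < min j x" using dense lx \<open>l < j\<close> by (metis min_less_iff_conj)
    ultimately have "c \<in> {l<..<j}" "c \<in> {l..x}" by auto
    then show False using l(2) \<open>{l<..<j} \<inter> A = {}\<close> by blast
  qed
  have hno: "\<forall>u\<in>lend A \<union> rend A. \<not>(l<u \<and> u<x)"
  proof (intro ballI notI)
    fix u assume u: "u \<in> lend A \<union> rend A" "l < u \<and> u < x"
    show False
    proof (cases "u \<in> lend A")
      case True
      have "bot < u" using u by (metis bot.extremum le_less_trans)
      then have "u \<noteq> bot" by auto
      then obtain j where "j < u" "{j<..<u} \<inter> A = {}" using True unfolding lend_def by auto
      moreover obtain c where "max j l < c" "c < u" using dense u \<open>j < u\<close> by (metis max_less_iff_conj)
      ultimately have "c \<in> {j<..<u}" "c \<in> {l..x}" using u by auto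
      then show False using l(2) \<open>{j<..<u} \<inter> A = {}\<close> by blast
    next
      case False
      then have "u \<in> rend A" using u by auto
      then obtain j where "u < j" "{u<..<j} \<inter> A = {}" unfolding rend_def by auto
      moreover obtain c where "u < c" "c < min j x" using dense u \<open>u < j\<close> by (metis min_less_iff_conj)
      ultimately have "c \<in> {u<..<j}" "c \<in> {l..x}" using u by auto
      then show False using l(2) \<open>{u<..<j} \<inter> A = {}\<close> by blast
    qed
  qed
  show ?thesis unfolding memS_def using lL lR lx hno by blast
qed

lemma K2:
  fixes A :: "'a::{dense_linorder,no_top,order_bot} set"
  assumes "Lset A" shows "Sset (lend A) (rend A) = A"
proof -
  obtain E where E: "finite E" "bot \<in> E" "unif E A" "clos E A" using Lset_good[OF assms] by blast
  show ?thesis unfolding Sset_def using K2_sub[OF E] K2_sup[OF E] by blast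
qed

lemma K3:
  fixes L R :: "'a::{dense_linorder,no_top,order_bot} set"
  assumes fL: "finite L" and fR: "finite R"
  shows "Lset (Sset L R)"
proof -
  let ?U = "L \<union> R"
  define J where "J p = (if \<exists>u\<in>?U. p < u then {p..Min {u\<in>?U. p<u}} else {p..})" for p
  define F where "F = (\<lambda>u. {u..u}) ` ?U \<union> J ` (L - R)"
  have fU: "finite ?U" using fL fR by auto
  have "finite F" unfolding F_def using fL fR by auto
  moreover have "\<forall>S\<in>F. closed_interval S"
  proof
    fix S assume "S \<in> F"
    then consider u where "S = {u..u}" | p where "S = J p" unfolding F_def by blast
    then show "closed_interval S"
    proof cases
      case 1
      then show ?thesis unfolding closed_interval_def by blast
    next
      case 2
      show ?thesis
      proof (cases "\<exists>u\<in>?U. p < u")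
        case True
        then have "S = {p..Min {u\<in>?U. p<u}}" using 2 unfolding J_def by simp
        then show ?thesis unfolding closed_interval_def by blast
      next
        case False
        then have "S = {p..}" using 2 unfolding J_def by simp
        then show ?thesis unfolding closed_interval_def by blast
      qed
    qed
  qed
  moreover have "Sset L R = \<Union>F"
  proof
    show "Sset L R \<subseteq> \<Union>F"
    proof
      fix x assume "x \<in> Sset L R"
      then have m: "memS x L R" unfolding Sset_def by auto
      show "x \<in> \<Union>F"
      proof (cases "x \<in> ?U")
        case True
        then show ?thesis unfolding F_def by auto
      next
        case False
        then obtain p where p: "p \<in> L" "p \<notin> R" "p < x" "\<forall>u\<in>?U. \<not>(p<u \<and> u<x)"
          using m unfolding memS_def by blast
        have "x \<in> J p"
        proof (cases "\<exists>u\<in>?U. p < u")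
          case True
          let ?s = "Min {u\<in>?U. p<u}"
          have fs: "finite {u\<in>?U. p<u}" using fU by auto
          have "?s \<in> {u\<in>?U. p<u}" using True fs Min_in by blast
          then have "\<not> ?s < x" "?s \<noteq> x" using p(4) False by auto
          then have "x < ?s" by auto
          then show ?thesis using True p unfolding J_def by auto
        next
          case False
          then show ?thesis using p unfolding J_def by auto
        qed
        then show ?thesis using p unfolding F_def by auto
      qed
    qed
  next
    show "\<Union>F \<subseteq> Sset L R"
    proof
      fix x assume "x \<in> \<Union>F"
      then consider "x \<in> ?U" | p where "p \<in> L" "p \<notin> R" "x \<in> J p" unfolding F_def by auto
      then show "x \<in> Sset L R"
      proof cases
        case 1
        then show ?thesis unfolding Sset_def memS_def by auto
      next
        case 2
        show ?thesis
        proof (cases "x = p")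
          case True
          then show ?thesis using 2 unfolding Sset_def memS_def by auto
        next
          case xp: False
          show ?thesis
          proof (cases "\<exists>u\<in>?U. p < u")
            case True
            let ?s = "Min {u\<in>?U. p<u}"
            have fs: "finite {u\<in>?U. p<u}" using fU by auto
            have sin: "?s \<in> {u\<in>?U. p<u}" using True fs Min_in by blast
            have smin: "\<And>u. u \<in> ?U \<Longrightarrow> p < u \<Longrightarrow> ?s \<le> u" using fs by auto
            have x: "p \<le> x" "x \<le> ?s" using 2 True unfolding J_def by auto
            show ?thesis
            proof (cases "x = ?s")
              case True
              then show ?thesis using sin unfolding Sset_def memS_def by auto
            next
              case False
              then have "p < x" "x < ?s" using x xp by auto
              have "\<forall>u\<in>?U. \<not>(p<u \<and> u<x)"
              proof (intro ballI notI)
                fix u assume "u \<in> ?U" "p < u \<and> u < x"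
                then have "?s \<le> u" using smin by auto
                then show False using \<open>x < ?s\<close> \<open>p < u \<and> u < x\<close> by auto
              qed
              then show ?thesis using 2 \<open>p < x\<close> unfolding Sset_def memS_def by blast
            qed
          next
            case False
            then have "p < x" using 2 xp unfolding J_def by auto
            then show ?thesis using 2 False unfolding Sset_def memS_def by blast
          qed
        qed
      qed
    qed
  qed
  ultimately show ?thesis unfolding Lset_def by blast
qed



lemma closed_interval_Int:
  fixes S T :: "'a::linorder set"
  assumes "closed_interval S" "closed_interval T"
  shows "closed_interval (S \<inter> T)"
proof -
  have e1: "{i..} \<inter> {k..} = {max i k..}" for i k :: 'a by auto
  have e2: "{i..} \<inter> {..l} = {i..l}" for i l :: 'a by auto
  have e3: "{..l} \<inter> {i..} = {i..l}" for i l :: 'a by auto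
  have c1: "closed_interval {i..j}" for i j :: 'a unfolding closed_interval_def by blast
  have c2: "closed_interval {i..}" for i :: 'a unfolding closed_interval_def by blast
  have c3: "closed_interval {..j}" for j :: 'a unfolding closed_interval_def by blast
  show ?thesis using assms unfolding closed_interval_def[of S] closed_interval_def[of T]
    by (elim disjE exE) (simp_all add: e1 e2 e3 c1 c2 c3)
qed

lemma Lset_Un: "Lset A \<Longrightarrow> Lset B \<Longrightarrow> Lset (A \<union> B)"
  unfolding Lset_def
proof (elim exE conjE)
  fix F G assume "finite F" "\<forall>S\<in>F. closed_interval S" "A = \<Union>F" "finite G" "\<forall>S\<in>G. closed_interval S" "B = \<Union>G"
  then show "\<exists>H. finite H \<and> (\<forall>S\<in>H. closed_interval S) \<and> A \<union> B = \<Union>H"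
    by (intro exI[of _ "F \<union> G"]) auto
qed

lemma Lset_Int:
  fixes A B :: "'a::linorder set"
  shows "Lset A \<Longrightarrow> Lset B \<Longrightarrow> Lset (A \<inter> B)"
  unfolding Lset_def
proof (elim exE conjE)
  fix F G assume h: "finite F" "\<forall>S\<in>F. closed_interval S" "A = \<Union>F" "finite G" "\<forall>S\<in>G. closed_interval S" "B = \<Union>G"
  let ?H = "(\<lambda>(S,T). S \<inter> T) ` (F \<times> G)"
  have "A \<inter> B = \<Union>?H" using h by auto
  moreover have "finite ?H" using h by auto
  moreover have "\<forall>S\<in>?H. closed_interval S" using h closed_interval_Int by auto
  ultimately show "\<exists>H. finite H \<and> (\<forall>S\<in>H. closed_interval S) \<and> A \<inter> B = \<Union>H" by blast
qed

lemma Lset_fin: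
  fixes X :: "'a::linorder set"
  assumes "finite X" shows "Lset X"
  unfolding Lset_def
proof (intro exI[of _ "(\<lambda>a. {a..a}) ` X"] conjI)
  show "finite ((\<lambda>a. {a..a}) ` X)" using assms by auto
  show "\<forall>S\<in>(\<lambda>a. {a..a}) ` X. closed_interval S" unfolding closed_interval_def by blast
  show "X = \<Union> ((\<lambda>a. {a..a}) ` X)" by auto
qed

lemma lend_fin:
  fixes F :: "'a::{dense_linorder,no_top,order_bot} set"
  assumes "finite F" shows "lend F = F"
proof
  show "lend F \<subseteq> F" by (rule lend_sub)
  show "F \<subseteq> lend F"
  proof
    fix i assume iF: "i \<in> F"
    show "i \<in> lend F"
    proof (cases "i = bot")
      case True then show ?thesis using iF unfolding lend_def by auto
    next
      case False
      then have bi: "bot < i" using bot_less by blast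
      define D where "D = {f \<in> F. f < i}"
      have fD: "finite D" using assms unfolding D_def by auto
      define j where "j = (if D = {} then bot else Max D)"
      have "j < i" using bi fD Max_in unfolding j_def D_def by (auto)
      moreover have "{j<..<i} \<inter> F = {}"
      proof (rule ccontr)
        assume "{j<..<i} \<inter> F \<noteq> {}"
        then obtain f where f: "f \<in> F" "j < f" "f < i" by auto
        then have "f \<in> D" unfolding D_def by auto
        then have "f \<le> j" using fD unfolding j_def by auto
        then show False using f by auto
      qed
      ultimately show ?thesis using iF unfolding lend_def by auto
    qed
  qed
qed

lemma rend_fin:
  fixes F :: "'a::{dense_linorder,no_top,order_bot} set"
  assumes "finite F" shows "rend F = F"
proof
  show "rend F \<subseteq> F" by (rule rend_sub)
  show "F \<subseteq> rend F"
  proof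
    fix i assume iF: "i \<in> F"
    define D where "D = {f \<in> F. i < f}"
    have fD: "finite D" using assms unfolding D_def by auto
    obtain g where "i < g" using gt_ex by blast
    define j where "j = (if D = {} then g else Min D)"
    have "i < j" using \<open>i < g\<close> fD Min_in unfolding j_def D_def by (auto)
    moreover have "{i<..<j} \<inter> F = {}"
    proof (rule ccontr)
      assume "{i<..<j} \<inter> F \<noteq> {}"
      then obtain f where f: "f \<in> F" "i < f" "f < j" by auto
      then have "f \<in> D" unfolding D_def by auto
      then have "j \<le> f" using fD unfolding j_def by auto
      then show False using f by auto
    qed
    ultimately show "i \<in> rend F" using iF unfolding rend_def by auto
  qed
qed

lemma memS_Lset:
  fixes A :: "'a::{dense_linorder,no_top,order_bot} set"
  assumes "Lset A" shows "memS a (lend A) (rend A) \<longleftrightarrow> a \<in> A"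
  using K2[OF assms] unfolding Sset_def by blast

definition DomS :: "'a::{linorder,order_bot} set \<Rightarrow> 'a set \<Rightarrow> bool" where
  "DomS L R \<longleftrightarrow> lend (Sset L R) = L \<and> rend (Sset L R) = R"

lemma DomS_Lset:
  fixes A :: "'a::{dense_linorder,no_top,order_bot} set"
  assumes "Lset A" shows "DomS (lend A) (rend A)"
  using K2[OF assms] unfolding DomS_def by simp

lemma DomS_D:
  fixes L R :: "'a::{dense_linorder,no_top,order_bot} set"
  assumes "DomS L R" "finite L" "finite R"
  shows "Lset (Sset L R)" "lend (Sset L R) = L" "rend (Sset L R) = R"
  using K3[OF assms(2,3)] assms(1) unfolding DomS_def by auto

lemma memS_imp_le:
  fixes L R :: "'a::linorder set"
  assumes "memS a L R" shows "\<exists>u\<in>L \<union> R. u \<le> a"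
  using assms unfolding memS_def by (auto intro: less_imp_le)

lemma Lmin_eq:
  fixes A :: "'a::{dense_linorder,no_top,order_bot} set"
  assumes "Lset A" shows "Lmin A = Wmin (lend A)"
proof -
  let ?L = "lend A" and ?R = "rend A"
  have fin: "finite ?L" "finite ?R" using Lset_finite[OF assms] by auto
  have mem: "\<And>a. a \<in> A \<longleftrightarrow> memS a ?L ?R" using memS_Lset[OF assms] by blast
  show ?thesis
  proof (cases "A = {}")
    case True
    then show ?thesis using lend_sub[of A] unfolding Lmin_def Wmin_def by auto
  next
    case False
    then obtain a where "a \<in> A" by auto
    then have "memS a ?L ?R" using mem by blast
    then obtain u0 where "u0 \<in> ?L \<union> ?R" using memS_imp_le by blast
    then have "?L \<union> ?R \<noteq> {}" by blast
    define m where "m = Min (?L \<union> ?R)"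
    have fU: "finite (?L \<union> ?R)" using fin by auto
    have mU: "m \<in> ?L \<union> ?R" unfolding m_def by (rule Min_in[OF fU \<open>?L \<union> ?R \<noteq> {}\<close>])
    have mle: "\<And>u. u \<in> ?L \<union> ?R \<Longrightarrow> m \<le> u" using fU unfolding m_def by auto
    have mA: "m \<in> A" using mU lend_sub rend_sub by blast
    have allge: "\<And>b. b \<in> A \<Longrightarrow> m \<le> b"
    proof -
      fix b assume "b \<in> A"
      then have "memS b ?L ?R" using mem by blast
      then obtain u where "u \<in> ?L \<union> ?R" "u \<le> b" using memS_imp_le by blast
      then show "m \<le> b" using mle[of u] by simp
    qed
    have mL: "m \<in> ?L"
    proof (cases "m = bot")
      case True then show ?thesis using mA unfolding lend_def by auto
    next
      case False
      then have "bot < m" using bot_less by blast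
      moreover have "{bot<..<m} \<inter> A = {}" using allge by fastforce
      ultimately show ?thesis using mA unfolding lend_def by auto
    qed
    have "Min ?L = m" by (rule Min_eqI[OF fin(1) _ mL]) (simp add: mle)
    moreover have "(LEAST x. x \<in> A) = m" by (rule Least_equality) (use mA allge in auto)
    moreover have "?L \<noteq> {}" using mL by blast
    ultimately show ?thesis using False unfolding Lmin_def Wmin_def by simp
  qed
qed

lemma Lmax_eq:
  fixes A :: "'a::{dense_linorder,no_top,order_bot} set"
  assumes "Lset A"
  shows "Lmax A = (if Wmax (lend A \<union> rend A) \<subseteq> rend A then Wmax (lend A \<union> rend A) else {})"
proof -
  let ?L = "lend A" and ?R = "rend A"
  have fin: "finite ?L" "finite ?R" using Lset_finite[OF assms] by auto
  have mem: "\<And>a. a \<in> A \<longleftrightarrow> memS a ?L ?R" using memS_Lset[OF assms] by blast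
  show ?thesis
  proof (cases "?L \<union> ?R = {}")
    case True
    have "\<not> memS a ?L ?R" for a using True memS_imp_le by blast
    then have "A = {}" using mem by blast
    then show ?thesis using True unfolding Lmax_def Wmax_def by auto
  next
    case ne: False
    define m where "m = Max (?L \<union> ?R)"
    have fU: "finite (?L \<union> ?R)" using fin by auto
    have mU: "m \<in> ?L \<union> ?R" unfolding m_def by (rule Max_in[OF fU ne])
    have mle: "\<And>u. u \<in> ?L \<union> ?R \<Longrightarrow> u \<le> m" using fU unfolding m_def by auto
    have mA: "m \<in> A" using mU lend_sub rend_sub by blast
    have W: "Wmax (?L \<union> ?R) = {m}" using ne unfolding Wmax_def m_def by auto
    show ?thesis
    proof (cases "m \<in> ?R")
      case True
      have allle: "\<And>b. b \<in> A \<Longrightarrow> b \<le> m"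
      proof (rule ccontr)
        fix b assume "b \<in> A" "\<not> b \<le> m"
        then have mb: "m < b" by auto
        have "memS b ?L ?R" using mem \<open>b \<in> A\<close> by blast
        then have "b \<in> ?L \<union> ?R \<or> (\<exists>p\<in>?L. p \<notin> ?R \<and> p < b \<and> (\<forall>u\<in>?L \<union> ?R. \<not>(p<u \<and> u<b)))"
          unfolding memS_def by blast
        then show False
        proof
          assume "b \<in> ?L \<union> ?R" then show False using mle mb by force
        next
          assume "\<exists>p\<in>?L. p \<notin> ?R \<and> p < b \<and> (\<forall>u\<in>?L \<union> ?R. \<not>(p<u \<and> u<b))"
          then obtain p where p: "p \<in> ?L" "p \<notin> ?R" "\<forall>u\<in>?L \<union> ?R. \<not>(p<u \<and> u<b)" by blast
          have "p \<le> m" using p mle by blast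
          moreover have "p \<noteq> m" using p True by auto
          ultimately show False using p(3) mU mb by auto
        qed
      qed
      have "bdd_above A" using allle unfolding bdd_above_def by blast
      moreover have "(GREATEST x. x \<in> A) = m" using mA allle by (intro Greatest_equality) auto
      ultimately show ?thesis using W True mA unfolding Lmax_def by auto
    next
      case False
      then have mL: "m \<in> ?L" using mU by auto
      have "\<not> bdd_above A"
      proof
        assume "bdd_above A"
        then obtain M where M: "\<And>x. x \<in> A \<Longrightarrow> x \<le> M" unfolding bdd_above_def by blast
        obtain b where b: "max M m < b" using gt_ex by blast
        have "\<forall>u\<in>?L \<union> ?R. \<not>(m<u \<and> u<b)" using mle by (meson leD)
        moreover have "m < b" using b by auto
        ultimately have "memS b ?L ?R" unfolding memS_def using mL False by blast
        then have "b \<in> A" using mem by blast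
        then show False using M b by force
      qed
      then show ?thesis using W False unfolding Lmax_def by auto
    qed
  qed
qed



definition "WOr \<phi> \<psi> = WNeg (WConj (WNeg \<phi>) (WNeg \<psi>))"
definition "WImp \<phi> \<psi> = WNeg (WConj \<phi> (WNeg \<psi>))"
definition "WIff \<phi> \<psi> = WConj (WImp \<phi> \<psi>) (WImp \<psi> \<phi>)"
definition "WSing v = WConj (WNeg (WEq (WVar v) WBot)) (WEq (WMin (WVar v)) (WVar v))"
definition "WAllP v \<phi> = WNeg (WEx v (WConj (WSing v) (WNeg \<phi>)))"
definition "WExP v \<phi> = WEx v (WConj (WSing v) \<phi>)"
definition "WSub s t = WEq (WInt s t) s"
definition "WLess s t = WConj (WNeg (WEq s t)) (WEq (WMin (WUn s t)) s)"
definition "WMem x L R = WOr (WSub x (WUn L R))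
   (WConj (WNeg (WEq (WInt (WIps (WUn (WUn L R) x) x) L) WBot))
          (WEq (WInt (WIps (WUn (WUn L R) x) x) R) WBot))"

lemma wsat_WOr[simp]: "wsat \<sigma> (WOr \<phi> \<psi>) \<longleftrightarrow> wsat \<sigma> \<phi> \<or> wsat \<sigma> \<psi>"
  unfolding WOr_def by simp
lemma wsat_WImp[simp]: "wsat \<sigma> (WImp \<phi> \<psi>) \<longleftrightarrow> (wsat \<sigma> \<phi> \<longrightarrow> wsat \<sigma> \<psi>)"
  unfolding WImp_def by simp
lemma wsat_WIff[simp]: "wsat \<sigma> (WIff \<phi> \<psi>) \<longleftrightarrow> (wsat \<sigma> \<phi> \<longleftrightarrow> wsat \<sigma> \<psi>)"
  unfolding WIff_def by auto

lemma sing_iff: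
  fixes X :: "'a::linorder set"
  assumes "finite X" shows "(X \<noteq> {} \<and> Wmin X = X) \<longleftrightarrow> (\<exists>a. X = {a})"
proof
  assume h: "X \<noteq> {} \<and> Wmin X = X"
  then have "X = {Min X}" unfolding Wmin_def by metis
  then show "\<exists>a. X = {a}" by blast
next
  assume "\<exists>a. X = {a}"
  then show "X \<noteq> {} \<and> Wmin X = X" unfolding Wmin_def by auto
qed

lemma wsat_WSing: "finite (\<sigma> v) \<Longrightarrow> wsat \<sigma> (WSing v) \<longleftrightarrow> (\<exists>a. \<sigma> v = {a})"
  unfolding WSing_def using sing_iff[of "\<sigma> v"] by simp

lemma wsat_WAllP[simp]: "wsat \<sigma> (WAllP v \<phi>) \<longleftrightarrow> (\<forall>a. wsat (\<sigma>(v := {a})) \<phi>)"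
proof -
  have "wsat \<sigma> (WAllP v \<phi>) \<longleftrightarrow> \<not> (\<exists>X. finite X \<and> wsat (\<sigma>(v:=X)) (WSing v) \<and> \<not> wsat (\<sigma>(v:=X)) \<phi>)"
    unfolding WAllP_def by simp
  also have "\<dots> \<longleftrightarrow> \<not> (\<exists>X. finite X \<and> (\<exists>a. X = {a}) \<and> \<not> wsat (\<sigma>(v:=X)) \<phi>)"
    using wsat_WSing[of "\<sigma>(v:=X)" v for X] by (auto simp del: fun_upd_apply) (auto)
  also have "\<dots> \<longleftrightarrow> (\<forall>a. wsat (\<sigma>(v := {a})) \<phi>)" by auto
  finally show ?thesis .
qed

lemma wsat_WExP[simp]: "wsat \<sigma> (WExP v \<phi>) \<longleftrightarrow> (\<exists>a. wsat (\<sigma>(v := {a})) \<phi>)"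
proof -
  have "wsat \<sigma> (WExP v \<phi>) \<longleftrightarrow> (\<exists>X. finite X \<and> wsat (\<sigma>(v:=X)) (WSing v) \<and> wsat (\<sigma>(v:=X)) \<phi>)"
    unfolding WExP_def by simp
  also have "\<dots> \<longleftrightarrow> (\<exists>X. finite X \<and> (\<exists>a. X = {a}) \<and> wsat (\<sigma>(v:=X)) \<phi>)"
    using wsat_WSing[of "\<sigma>(v:=X)" v for X] by (auto simp del: fun_upd_apply) (auto)
  also have "\<dots> \<longleftrightarrow> (\<exists>a. wsat (\<sigma>(v := {a})) \<phi>)" by auto
  finally show ?thesis .
qed

lemma wsat_WSub[simp]: "wsat \<sigma> (WSub s t) \<longleftrightarrow> weval \<sigma> s \<subseteq> weval \<sigma> t"
  unfolding WSub_def by auto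

lemma wsat_WLess[simp]:
  "weval \<sigma> s = {a} \<Longrightarrow> weval \<sigma> t = {b} \<Longrightarrow> wsat \<sigma> (WLess s t) \<longleftrightarrow> a < b"
proof -
  have "Wmin {b, a} = {min a b}" unfolding Wmin_def by (simp add: min.commute)
  then show "weval \<sigma> s = {a} \<Longrightarrow> weval \<sigma> t = {b} \<Longrightarrow> wsat \<sigma> (WLess s t) \<longleftrightarrow> a < b"
    unfolding WLess_def by (auto simp: min_def)
qed

lemma ips_pred:
  fixes U :: "'a::linorder set"
  shows "ips (U \<union> {a}) {a} = {p \<in> U. p < a \<and> (\<forall>k\<in>U. \<not>(p < k \<and> k < a))}"
  unfolding ips_def by (auto simp: not_less)

lemma wsat_WMem[simp]:
  fixes \<sigma> :: "nat \<Rightarrow> 'a::{linorder,order_bot} set"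
  assumes "weval \<sigma> x = {a}"
  shows "wsat \<sigma> (WMem x L R) \<longleftrightarrow> memS a (weval \<sigma> L) (weval \<sigma> R)"
proof -
  let ?L = "weval \<sigma> L" and ?R = "weval \<sigma> R"
  let ?P = "{p \<in> ?L \<union> ?R. p < a \<and> (\<forall>k\<in>?L \<union> ?R. \<not>(p < k \<and> k < a))}"
  have P: "weval \<sigma> (WIps (WUn (WUn L R) x) x) = ?P" using assms ips_pred[of "?L \<union> ?R" a] by simp
  have uniq: "\<And>p q. p \<in> ?P \<Longrightarrow> q \<in> ?P \<Longrightarrow> p = q"
    by (metis (no_types, lifting) mem_Collect_eq not_less_iff_gr_or_eq)
  have "wsat \<sigma> (WMem x L R) \<longleftrightarrow> a \<in> ?L \<union> ?R \<or> (?P \<inter> ?L \<noteq> {} \<and> ?P \<inter> ?R = {})"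
    unfolding WMem_def using assms P by simp
  also have "\<dots> \<longleftrightarrow> memS a ?L ?R"
  proof -
    have "(?P \<inter> ?L \<noteq> {} \<and> ?P \<inter> ?R = {}) \<longleftrightarrow> (\<exists>p\<in>?L. p \<notin> ?R \<and> p < a \<and> (\<forall>u\<in>?L \<union> ?R. \<not>(p<u \<and> u<a)))"
    proof
      assume "?P \<inter> ?L \<noteq> {} \<and> ?P \<inter> ?R = {}"
      then obtain p where "p \<in> ?P" "p \<in> ?L" "p \<notin> ?R" by blast
      then show "\<exists>p\<in>?L. p \<notin> ?R \<and> p < a \<and> (\<forall>u\<in>?L \<union> ?R. \<not>(p<u \<and> u<a))" by blast
    next
      assume "\<exists>p\<in>?L. p \<notin> ?R \<and> p < a \<and> (\<forall>u\<in>?L \<union> ?R. \<not>(p<u \<and> u<a))"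
      then obtain p where p: "p \<in> ?L" "p \<notin> ?R" "p < a" "\<forall>u\<in>?L \<union> ?R. \<not>(p<u \<and> u<a)" by blast
      then have pP: "p \<in> ?P" by blast
      have "?P \<inter> ?R = {}" using uniq[OF pP] p(2) by blast
      then show "?P \<inter> ?L \<noteq> {} \<and> ?P \<inter> ?R = {}" using pP p(1) by blast
    qed
    then show ?thesis unfolding memS_def by blast
  qed
  finally show ?thesis .
qed

lemma "map \<sigma> [0..<6] = [\<sigma> 0, \<sigma> 1, \<sigma> 2, \<sigma> 3, \<sigma> 4, \<sigma> 5]"
  by (simp add: upt_rec eval_nat_numeral)


definition DomF :: "nat \<Rightarrow> nat \<Rightarrow> wform" where
"DomF l r = WConj
 (WAllP 100 (WIff (WSub (WVar 100) (WVar l))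
   (WConj (WMem (WVar 100) (WVar l) (WVar r))
     (WOr (WEq (WVar 100) WZero)
       (WExP 101 (WConj (WLess (WVar 101) (WVar 100))
          (WAllP 102 (WImp (WConj (WLess (WVar 101) (WVar 102)) (WLess (WVar 102) (WVar 100)))
               (WNeg (WMem (WVar 102) (WVar l) (WVar r)))))))))))
 (WAllP 100 (WIff (WSub (WVar 100) (WVar r))
   (WConj (WMem (WVar 100) (WVar l) (WVar r))
       (WExP 101 (WConj (WLess (WVar 100) (WVar 101))
          (WAllP 102 (WImp (WConj (WLess (WVar 100) (WVar 102)) (WLess (WVar 102) (WVar 101)))
               (WNeg (WMem (WVar 102) (WVar l) (WVar r))))))))))"

lemma DomF_sem0:
  fixes \<sigma> :: "nat \<Rightarrow> 'a::{linorder,order_bot} set"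
  assumes "l \<noteq> 100" "l \<noteq> 101" "l \<noteq> 102" "r \<noteq> 100" "r \<noteq> 101" "r \<noteq> 102"
  shows "wsat \<sigma> (DomF l r) \<longleftrightarrow>
    (\<forall>a. a \<in> \<sigma> l \<longleftrightarrow> (memS a (\<sigma> l) (\<sigma> r) \<and> (a = bot \<or> (\<exists>b. b < a \<and> (\<forall>c. b < c \<and> c < a \<longrightarrow> \<not> memS c (\<sigma> l) (\<sigma> r)))))) \<and>
    (\<forall>a. a \<in> \<sigma> r \<longleftrightarrow> (memS a (\<sigma> l) (\<sigma> r) \<and> (\<exists>b. a < b \<and> (\<forall>c. a < c \<and> c < b \<longrightarrow> \<not> memS c (\<sigma> l) (\<sigma> r)))))"
  unfolding DomF_def using assms by simp

lemma DomS_alt: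
  fixes L R :: "'a::{linorder,order_bot} set"
  shows "DomS L R \<longleftrightarrow>
    (\<forall>a. a \<in> L \<longleftrightarrow> (memS a L R \<and> (a = bot \<or> (\<exists>b. b < a \<and> (\<forall>c. b < c \<and> c < a \<longrightarrow> \<not> memS c L R))))) \<and>
    (\<forall>a. a \<in> R \<longleftrightarrow> (memS a L R \<and> (\<exists>b. a < b \<and> (\<forall>c. a < c \<and> c < b \<longrightarrow> \<not> memS c L R))))"
proof -
  have e1: "lend (Sset L R) = L \<longleftrightarrow> (\<forall>a. a \<in> L \<longleftrightarrow> (memS a L R \<and> (a = bot \<or> (\<exists>b. b < a \<and> (\<forall>c. b < c \<and> c < a \<longrightarrow> \<not> memS c L R)))))"
  proof -
    have p1: "\<And>a. a \<in> lend (Sset L R) \<longleftrightarrow> (memS a L R \<and> (a = bot \<or> (\<exists>b. b < a \<and> (\<forall>c. b < c \<and> c < a \<longrightarrow> \<not> memS c L R))))"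
      unfolding lend_def Sset_def by (auto simp: disjoint_iff)
    show ?thesis unfolding set_eq_iff p1 by blast
  qed
  have e2: "rend (Sset L R) = R \<longleftrightarrow> (\<forall>a. a \<in> R \<longleftrightarrow> (memS a L R \<and> (\<exists>b. a < b \<and> (\<forall>c. a < c \<and> c < b \<longrightarrow> \<not> memS c L R))))"
  proof -
    have p1: "\<And>a. a \<in> rend (Sset L R) \<longleftrightarrow> (memS a L R \<and> (\<exists>b. a < b \<and> (\<forall>c. a < c \<and> c < b \<longrightarrow> \<not> memS c L R)))"
      unfolding rend_def Sset_def by (auto simp: disjoint_iff)
    show ?thesis unfolding set_eq_iff p1 by blast
  qed
  show ?thesis unfolding DomS_def e1 e2 ..
qed

lemma DomF_sem:
  fixes \<sigma> :: "nat \<Rightarrow> 'a::{linorder,order_bot} set"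
  assumes "l < 100" "r < 100"
  shows "wsat \<sigma> (DomF l r) \<longleftrightarrow> DomS (\<sigma> l) (\<sigma> r)"
  unfolding DomS_alt using assms by (subst DomF_sem0) auto

lemma DomS_iff:
  fixes L R :: "'a::{dense_linorder,no_top,order_bot} set"
  assumes "finite L" "finite R"
  shows "DomS L R \<longleftrightarrow> (\<exists>A. Lset A \<and> lend A = L \<and> rend A = R)"
  using DomS_D[OF _ assms] DomS_Lset by metis



lemma W_defI:
  assumes "R \<subseteq> {xs. length xs = n \<and> (\<forall>X\<in>set xs. finite X)}"
    "\<And>\<sigma>. \<forall>i. finite (\<sigma> i) \<Longrightarrow> wsat \<sigma> \<phi> \<longleftrightarrow> map \<sigma> [0..<n] \<in> R"
  shows "W_definable n R"
  unfolding W_definable_def using assms by blast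

lemma m2: "map \<sigma> [0..<2] = [\<sigma> 0, \<sigma> 1]" by (simp add: upt_rec eval_nat_numeral)
lemma m4: "map \<sigma> [0..<4] = [\<sigma> 0, \<sigma> 1, \<sigma> 2, \<sigma> 3]" by (simp add: upt_rec eval_nat_numeral)
lemma m6: "map \<sigma> [0..<6] = [\<sigma> 0, \<sigma> 1, \<sigma> 2, \<sigma> 3, \<sigma> 4, \<sigma> 5]" by (simp add: upt_rec eval_nat_numeral)

lemma finite_Wmin: "finite (Wmin X)" unfolding Wmin_def by auto
lemma finite_Wmax: "finite (Wmax X)" unfolding Wmax_def by auto

lemma d_dom: "W_definable 2 {[lend A, rend A] | A::'a::{dense_linorder,no_top,order_bot} set. Lset A}"
proof (rule W_defI[where \<phi> = "DomF 0 1"])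
  show "{[lend A, rend A] | A::'a set. Lset A} \<subseteq> {xs. length xs = 2 \<and> (\<forall>X\<in>set xs. finite X)}"
    using Lset_finite by auto
  fix \<sigma> :: "nat \<Rightarrow> 'a set" assume fin: "\<forall>i. finite (\<sigma> i)"
  have "wsat \<sigma> (DomF 0 1) \<longleftrightarrow> (\<exists>A. Lset A \<and> lend A = \<sigma> 0 \<and> rend A = \<sigma> 1)"
    using fin by (simp add: DomF_sem DomS_iff)
  then show "wsat \<sigma> (DomF 0 1) \<longleftrightarrow> map \<sigma> [0..<2] \<in> {[lend A, rend A] | A::'a set. Lset A}"
    by (auto simp: m2)
qed

lemma d_eq: "W_definable (2*2) {[lend A, rend A] @ [lend B, rend B] | A B::'a::{dense_linorder,no_top,order_bot} set. Lset A \<and> Lset B \<and> A = B}"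
proof (rule W_defI[where \<phi> = "WConj (DomF 0 1) (WConj (WEq (WVar 0) (WVar 2)) (WEq (WVar 1) (WVar 3)))"])
  show "{[lend A, rend A] @ [lend B, rend B] | A B::'a set. Lset A \<and> Lset B \<and> A = B} \<subseteq> {xs. length xs = 2*2 \<and> (\<forall>X\<in>set xs. finite X)}"
    using Lset_finite by auto
  fix \<sigma> :: "nat \<Rightarrow> 'a set" assume fin: "\<forall>i. finite (\<sigma> i)"
  have "wsat \<sigma> (WConj (DomF 0 1) (WConj (WEq (WVar 0) (WVar 2)) (WEq (WVar 1) (WVar 3)))) \<longleftrightarrow>
     (\<exists>A. Lset A \<and> lend A = \<sigma> 0 \<and> rend A = \<sigma> 1) \<and> \<sigma> 0 = \<sigma> 2 \<and> \<sigma> 1 = \<sigma> 3"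
    using fin by (simp add: DomF_sem DomS_iff)
  then show "wsat \<sigma> (WConj (DomF 0 1) (WConj (WEq (WVar 0) (WVar 2)) (WEq (WVar 1) (WVar 3)))) \<longleftrightarrow>
     map \<sigma> [0..<2*2] \<in> {[lend A, rend A] @ [lend B, rend B] | A B::'a set. Lset A \<and> Lset B \<and> A = B}"
    by (auto simp: m4)
qed

lemma union_core:
  fixes s0 s1 s2 s3 s4 s5 :: "'a::{dense_linorder,no_top,order_bot} set"
  assumes f: "finite s0" "finite s1" "finite s2" "finite s3" "finite s4" "finite s5"
  shows "(DomS s0 s1 \<and> DomS s2 s3 \<and> DomS s4 s5 \<and> (\<forall>a. memS a s4 s5 \<longleftrightarrow> memS a s0 s1 \<or> memS a s2 s3))
    \<longleftrightarrow> (\<exists>A B. Lset A \<and> Lset B \<and> s0 = lend A \<and> s1 = rend A \<and> s2 = lend B \<and> s3 = rend B \<and> s4 = lend (A \<union> B) \<and> s5 = rend (A \<union> B))"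
proof
  assume h: "DomS s0 s1 \<and> DomS s2 s3 \<and> DomS s4 s5 \<and> (\<forall>a. memS a s4 s5 \<longleftrightarrow> memS a s0 s1 \<or> memS a s2 s3)"
  note A = DomS_D[OF _ f(1,2)] and B = DomS_D[OF _ f(3,4)] and C = DomS_D[OF _ f(5,6)]
  have "Sset s4 s5 = Sset s0 s1 \<union> Sset s2 s3" using h unfolding Sset_def by auto
  then show "\<exists>A B. Lset A \<and> Lset B \<and> s0 = lend A \<and> s1 = rend A \<and> s2 = lend B \<and> s3 = rend B \<and> s4 = lend (A \<union> B) \<and> s5 = rend (A \<union> B)"
    using h A B C by (intro exI[of _ "Sset s0 s1"] exI[of _ "Sset s2 s3"]) metis
next
  assume "\<exists>A B. Lset A \<and> Lset B \<and> s0 = lend A \<and> s1 = rend A \<and> s2 = lend B \<and> s3 = rend B \<and> s4 = lend (A \<union> B) \<and> s5 = rend (A \<union> B)"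
  then obtain A B where h: "Lset A" "Lset B" "s0 = lend A" "s1 = rend A" "s2 = lend B" "s3 = rend B" "s4 = lend (A \<union> B)" "s5 = rend (A \<union> B)" by blast
  have AB: "Lset (A \<union> B)" using Lset_Un h by blast
  show "DomS s0 s1 \<and> DomS s2 s3 \<and> DomS s4 s5 \<and> (\<forall>a. memS a s4 s5 \<longleftrightarrow> memS a s0 s1 \<or> memS a s2 s3)"
    using h AB DomS_Lset memS_Lset[OF h(1)] memS_Lset[OF h(2)] memS_Lset[OF AB] by auto
qed

lemma inter_core:
  fixes s0 s1 s2 s3 s4 s5 :: "'a::{dense_linorder,no_top,order_bot} set"
  assumes f: "finite s0" "finite s1" "finite s2" "finite s3" "finite s4" "finite s5"
  shows "(DomS s0 s1 \<and> DomS s2 s3 \<and> DomS s4 s5 \<and> (\<forall>a. memS a s4 s5 \<longleftrightarrow> memS a s0 s1 \<and> memS a s2 s3))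
    \<longleftrightarrow> (\<exists>A B. Lset A \<and> Lset B \<and> s0 = lend A \<and> s1 = rend A \<and> s2 = lend B \<and> s3 = rend B \<and> s4 = lend (A \<inter> B) \<and> s5 = rend (A \<inter> B))"
proof
  assume h: "DomS s0 s1 \<and> DomS s2 s3 \<and> DomS s4 s5 \<and> (\<forall>a. memS a s4 s5 \<longleftrightarrow> memS a s0 s1 \<and> memS a s2 s3)"
  note A = DomS_D[OF _ f(1,2)] and B = DomS_D[OF _ f(3,4)] and C = DomS_D[OF _ f(5,6)]
  have "Sset s4 s5 = Sset s0 s1 \<inter> Sset s2 s3" using h unfolding Sset_def by auto
  then show "\<exists>A B. Lset A \<and> Lset B \<and> s0 = lend A \<and> s1 = rend A \<and> s2 = lend B \<and> s3 = rend B \<and> s4 = lend (A \<inter> B) \<and> s5 = rend (A \<inter> B)"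
    using h A B C by (intro exI[of _ "Sset s0 s1"] exI[of _ "Sset s2 s3"]) metis
next
  assume "\<exists>A B. Lset A \<and> Lset B \<and> s0 = lend A \<and> s1 = rend A \<and> s2 = lend B \<and> s3 = rend B \<and> s4 = lend (A \<inter> B) \<and> s5 = rend (A \<inter> B)"
  then obtain A B where h: "Lset A" "Lset B" "s0 = lend A" "s1 = rend A" "s2 = lend B" "s3 = rend B" "s4 = lend (A \<inter> B)" "s5 = rend (A \<inter> B)" by blast
  have AB: "Lset (A \<inter> B)" using Lset_Int h by blast
  show "DomS s0 s1 \<and> DomS s2 s3 \<and> DomS s4 s5 \<and> (\<forall>a. memS a s4 s5 \<longleftrightarrow> memS a s0 s1 \<and> memS a s2 s3)"
    using h AB DomS_Lset memS_Lset[OF h(1)] memS_Lset[OF h(2)] memS_Lset[OF AB] by auto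
qed

definition "UnF = WConj (DomF 0 1) (WConj (DomF 2 3) (WConj (DomF 4 5)
   (WAllP 100 (WIff (WMem (WVar 100) (WVar 4) (WVar 5))
      (WOr (WMem (WVar 100) (WVar 0) (WVar 1)) (WMem (WVar 100) (WVar 2) (WVar 3)))))))"

definition "IntF = WConj (DomF 0 1) (WConj (DomF 2 3) (WConj (DomF 4 5)
   (WAllP 100 (WIff (WMem (WVar 100) (WVar 4) (WVar 5))
      (WConj (WMem (WVar 100) (WVar 0) (WVar 1)) (WMem (WVar 100) (WVar 2) (WVar 3)))))))"

lemma d_un: "W_definable (3*2) {[lend A, rend A] @ [lend B, rend B] @ [lend (A \<union> B), rend (A \<union> B)] | A B::'a::{dense_linorder,no_top,order_bot} set. Lset A \<and> Lset B}"
proof (rule W_defI[where \<phi> = UnF])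
  show "{[lend A, rend A] @ [lend B, rend B] @ [lend (A \<union> B), rend (A \<union> B)] | A B::'a set. Lset A \<and> Lset B} \<subseteq> {xs. length xs = 3*2 \<and> (\<forall>X\<in>set xs. finite X)}"
    using Lset_finite Lset_Un by fastforce
  fix \<sigma> :: "nat \<Rightarrow> 'a set" assume fin: "\<forall>i. finite (\<sigma> i)"
  have "wsat \<sigma> UnF \<longleftrightarrow> (DomS (\<sigma> 0) (\<sigma> 1) \<and> DomS (\<sigma> 2) (\<sigma> 3) \<and> DomS (\<sigma> 4) (\<sigma> 5) \<and>
     (\<forall>a. memS a (\<sigma> 4) (\<sigma> 5) \<longleftrightarrow> memS a (\<sigma> 0) (\<sigma> 1) \<or> memS a (\<sigma> 2) (\<sigma> 3)))"
    unfolding UnF_def by (simp add: DomF_sem)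
  also have "\<dots> \<longleftrightarrow> (\<exists>A B. Lset A \<and> Lset B \<and> \<sigma> 0 = lend A \<and> \<sigma> 1 = rend A \<and> \<sigma> 2 = lend B \<and> \<sigma> 3 = rend B \<and> \<sigma> 4 = lend (A \<union> B) \<and> \<sigma> 5 = rend (A \<union> B))"
    using fin by (intro union_core) auto
  also have "\<dots> \<longleftrightarrow> map \<sigma> [0..<3*2] \<in> {[lend A, rend A] @ [lend B, rend B] @ [lend (A \<union> B), rend (A \<union> B)] | A B::'a set. Lset A \<and> Lset B}"
    by (auto simp: m6)
  finally show "wsat \<sigma> UnF \<longleftrightarrow> map \<sigma> [0..<3*2] \<in> {[lend A, rend A] @ [lend B, rend B] @ [lend (A \<union> B), rend (A \<union> B)] | A B::'a set. Lset A \<and> Lset B}" .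
qed

lemma d_int: "W_definable (3*2) {[lend A, rend A] @ [lend B, rend B] @ [lend (A \<inter> B), rend (A \<inter> B)] | A B::'a::{dense_linorder,no_top,order_bot} set. Lset A \<and> Lset B}"
proof (rule W_defI[where \<phi> = IntF])
  show "{[lend A, rend A] @ [lend B, rend B] @ [lend (A \<inter> B), rend (A \<inter> B)] | A B::'a set. Lset A \<and> Lset B} \<subseteq> {xs. length xs = 3*2 \<and> (\<forall>X\<in>set xs. finite X)}"
    using Lset_finite Lset_Int by fastforce
  fix \<sigma> :: "nat \<Rightarrow> 'a set" assume fin: "\<forall>i. finite (\<sigma> i)"
  have "wsat \<sigma> IntF \<longleftrightarrow> (DomS (\<sigma> 0) (\<sigma> 1) \<and> DomS (\<sigma> 2) (\<sigma> 3) \<and> DomS (\<sigma> 4) (\<sigma> 5) \<and>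
     (\<forall>a. memS a (\<sigma> 4) (\<sigma> 5) \<longleftrightarrow> memS a (\<sigma> 0) (\<sigma> 1) \<and> memS a (\<sigma> 2) (\<sigma> 3)))"
    unfolding IntF_def by (simp add: DomF_sem)
  also have "\<dots> \<longleftrightarrow> (\<exists>A B. Lset A \<and> Lset B \<and> \<sigma> 0 = lend A \<and> \<sigma> 1 = rend A \<and> \<sigma> 2 = lend B \<and> \<sigma> 3 = rend B \<and> \<sigma> 4 = lend (A \<inter> B) \<and> \<sigma> 5 = rend (A \<inter> B))"
    using fin by (intro inter_core) auto
  also have "\<dots> \<longleftrightarrow> map \<sigma> [0..<3*2] \<in> {[lend A, rend A] @ [lend B, rend B] @ [lend (A \<inter> B), rend (A \<inter> B)] | A B::'a set. Lset A \<and> Lset B}"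
    by (auto simp: m6)
  finally show "wsat \<sigma> IntF \<longleftrightarrow> map \<sigma> [0..<3*2] \<in> {[lend A, rend A] @ [lend B, rend B] @ [lend (A \<inter> B), rend (A \<inter> B)] | A B::'a set. Lset A \<and> Lset B}" .
qed


lemma d_empty: "W_definable 2 {[lend ({}::'a::{dense_linorder,no_top,order_bot} set), rend {}]}"
proof (rule W_defI[where \<phi> = "WConj (WEq (WVar 0) WBot) (WEq (WVar 1) WBot)"])
  have "lend ({}::'a set) = {}" "rend ({}::'a set) = {}"
    using lend_fin[of "{}::'a set"] rend_fin[of "{}::'a set"] by auto
  then show "{[lend ({}::'a set), rend {}]} \<subseteq> {xs. length xs = 2 \<and> (\<forall>X\<in>set xs. finite X)}" by simp
  fix \<sigma> :: "nat \<Rightarrow> 'a set" assume fin: "\<forall>i. finite (\<sigma> i)"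
  show "wsat \<sigma> (WConj (WEq (WVar 0) WBot) (WEq (WVar 1) WBot)) \<longleftrightarrow> map \<sigma> [0..<2] \<in> {[lend ({}::'a set), rend {}]}"
    using \<open>lend ({}::'a set) = {}\<close> \<open>rend ({}::'a set) = {}\<close> by (simp add: m2)
qed

lemma d_bot: "W_definable 2 {[lend ({bot}::'a::{dense_linorder,no_top,order_bot} set), rend {bot}]}"
proof (rule W_defI[where \<phi> = "WConj (WEq (WVar 0) WZero) (WEq (WVar 1) WZero)"])
  have "lend ({bot}::'a set) = {bot}" "rend ({bot}::'a set) = {bot}"
    using lend_fin[of "{bot::'a}"] rend_fin[of "{bot::'a}"] by auto
  then show "{[lend ({bot}::'a set), rend {bot}]} \<subseteq> {xs. length xs = 2 \<and> (\<forall>X\<in>set xs. finite X)}" by simp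
  fix \<sigma> :: "nat \<Rightarrow> 'a set" assume fin: "\<forall>i. finite (\<sigma> i)"
  show "wsat \<sigma> (WConj (WEq (WVar 0) WZero) (WEq (WVar 1) WZero)) \<longleftrightarrow> map \<sigma> [0..<2] \<in> {[lend ({bot}::'a set), rend {bot}]}"
    using \<open>lend ({bot}::'a set) = {bot}\<close> \<open>rend ({bot}::'a set) = {bot}\<close> by (simp add: m2)
qed

lemma d_min: "W_definable (2*2) {[lend A, rend A] @ [lend (Lmin A), rend (Lmin A)] | A::'a::{dense_linorder,no_top,order_bot} set. Lset A}"
proof (rule W_defI[where \<phi> = "WConj (DomF 0 1) (WConj (WEq (WVar 2) (WMin (WVar 0))) (WEq (WVar 3) (WMin (WVar 0))))"])
  have e: "lend (Lmin A) = Wmin (lend A)" "rend (Lmin A) = Wmin (lend A)" if "Lset A" for A :: "'a set"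
    by (simp_all add: Lmin_eq[OF that] lend_fin[OF finite_Wmin] rend_fin[OF finite_Wmin])
  show "{[lend A, rend A] @ [lend (Lmin A), rend (Lmin A)] | A::'a set. Lset A} \<subseteq> {xs. length xs = 2*2 \<and> (\<forall>X\<in>set xs. finite X)}"
    using Lset_finite e finite_Wmin by fastforce
  fix \<sigma> :: "nat \<Rightarrow> 'a set" assume fin: "\<forall>i. finite (\<sigma> i)"
  have "wsat \<sigma> (WConj (DomF 0 1) (WConj (WEq (WVar 2) (WMin (WVar 0))) (WEq (WVar 3) (WMin (WVar 0))))) \<longleftrightarrow>
     (\<exists>A. Lset A \<and> lend A = \<sigma> 0 \<and> rend A = \<sigma> 1) \<and> \<sigma> 2 = Wmin (\<sigma> 0) \<and> \<sigma> 3 = Wmin (\<sigma> 0)"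
    using fin by (simp add: DomF_sem DomS_iff)
  also have "\<dots> \<longleftrightarrow> (\<exists>A. \<sigma> 0 = lend A \<and> \<sigma> 1 = rend A \<and> \<sigma> 2 = lend (Lmin A) \<and> \<sigma> 3 = rend (Lmin A) \<and> Lset A)"
  proof
    assume h: "(\<exists>A. Lset A \<and> lend A = \<sigma> 0 \<and> rend A = \<sigma> 1) \<and> \<sigma> 2 = Wmin (\<sigma> 0) \<and> \<sigma> 3 = Wmin (\<sigma> 0)"
    then obtain A where A: "Lset A" "lend A = \<sigma> 0" "rend A = \<sigma> 1" by blast
    show "\<exists>A. \<sigma> 0 = lend A \<and> \<sigma> 1 = rend A \<and> \<sigma> 2 = lend (Lmin A) \<and> \<sigma> 3 = rend (Lmin A) \<and> Lset A"
      using A h e[OF A(1)] by (intro exI[of _ A]) simp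
  next
    assume "\<exists>A. \<sigma> 0 = lend A \<and> \<sigma> 1 = rend A \<and> \<sigma> 2 = lend (Lmin A) \<and> \<sigma> 3 = rend (Lmin A) \<and> Lset A"
    then obtain A where A: "Lset A" "lend A = \<sigma> 0" "rend A = \<sigma> 1" "\<sigma> 2 = lend (Lmin A)" "\<sigma> 3 = rend (Lmin A)" by blast
    then show "(\<exists>A. Lset A \<and> lend A = \<sigma> 0 \<and> rend A = \<sigma> 1) \<and> \<sigma> 2 = Wmin (\<sigma> 0) \<and> \<sigma> 3 = Wmin (\<sigma> 0)"
      using e[OF A(1)] by auto
  qed
  also have "\<dots> \<longleftrightarrow> map \<sigma> [0..<2*2] \<in> {[lend A, rend A] @ [lend (Lmin A), rend (Lmin A)] | A::'a set. Lset A}"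
    by (simp add: m4)
  finally show "wsat \<sigma> (WConj (DomF 0 1) (WConj (WEq (WVar 2) (WMin (WVar 0))) (WEq (WVar 3) (WMin (WVar 0))))) \<longleftrightarrow>
     map \<sigma> [0..<2*2] \<in> {[lend A, rend A] @ [lend (Lmin A), rend (Lmin A)] | A::'a set. Lset A}" .
qed

definition "MaxT = WMax (WUn (WVar 0) (WVar 1))"
definition "MaxF = WConj (DomF 0 1) (WOr (WConj (WSub MaxT (WVar 1)) (WConj (WEq (WVar 2) MaxT) (WEq (WVar 3) MaxT)))
    (WConj (WNeg (WSub MaxT (WVar 1))) (WConj (WEq (WVar 2) WBot) (WEq (WVar 3) WBot))))"

definition KM :: "'a::linorder set \<Rightarrow> 'a set \<Rightarrow> 'a set" where
  "KM L R = (if Wmax (L \<union> R) \<subseteq> R then Wmax (L \<union> R) else {})"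

lemma finite_KM: "finite (KM L R)" unfolding KM_def using finite_Wmax by auto

lemma d_max: "W_definable (2*2) {[lend A, rend A] @ [lend (Lmax A), rend (Lmax A)] | A::'a::{dense_linorder,no_top,order_bot} set. Lset A}"
proof (rule W_defI[where \<phi> = MaxF])
  have e: "lend (Lmax A) = KM (lend A) (rend A)" "rend (Lmax A) = KM (lend A) (rend A)" if "Lset A" for A :: "'a set"
  proof -
    have "Lmax A = KM (lend A) (rend A)" using Lmax_eq[OF that] unfolding KM_def .
    then show "lend (Lmax A) = KM (lend A) (rend A)" "rend (Lmax A) = KM (lend A) (rend A)"
      by (simp_all add: lend_fin[OF finite_KM] rend_fin[OF finite_KM])
  qed
  show "{[lend A, rend A] @ [lend (Lmax A), rend (Lmax A)] | A::'a set. Lset A} \<subseteq> {xs. length xs = 2*2 \<and> (\<forall>X\<in>set xs. finite X)}"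
    using Lset_finite e finite_KM by fastforce
  fix \<sigma> :: "nat \<Rightarrow> 'a set" assume fin: "\<forall>i. finite (\<sigma> i)"
  have "wsat \<sigma> MaxF \<longleftrightarrow>
     (\<exists>A. Lset A \<and> lend A = \<sigma> 0 \<and> rend A = \<sigma> 1) \<and> \<sigma> 2 = KM (\<sigma> 0) (\<sigma> 1) \<and> \<sigma> 3 = KM (\<sigma> 0) (\<sigma> 1)"
    using fin unfolding MaxF_def MaxT_def KM_def by (simp add: DomF_sem DomS_iff)
  also have "\<dots> \<longleftrightarrow> (\<exists>A. \<sigma> 0 = lend A \<and> \<sigma> 1 = rend A \<and> \<sigma> 2 = lend (Lmax A) \<and> \<sigma> 3 = rend (Lmax A) \<and> Lset A)"
  proof
    assume h: "(\<exists>A. Lset A \<and> lend A = \<sigma> 0 \<and> rend A = \<sigma> 1) \<and> \<sigma> 2 = KM (\<sigma> 0) (\<sigma> 1) \<and> \<sigma> 3 = KM (\<sigma> 0) (\<sigma> 1)"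
    then obtain A where A: "Lset A" "lend A = \<sigma> 0" "rend A = \<sigma> 1" by blast
    show "\<exists>A. \<sigma> 0 = lend A \<and> \<sigma> 1 = rend A \<and> \<sigma> 2 = lend (Lmax A) \<and> \<sigma> 3 = rend (Lmax A) \<and> Lset A"
      using A h e[OF A(1)] by (intro exI[of _ A]) simp
  next
    assume "\<exists>A. \<sigma> 0 = lend A \<and> \<sigma> 1 = rend A \<and> \<sigma> 2 = lend (Lmax A) \<and> \<sigma> 3 = rend (Lmax A) \<and> Lset A"
    then obtain A where A: "Lset A" "lend A = \<sigma> 0" "rend A = \<sigma> 1" "\<sigma> 2 = lend (Lmax A)" "\<sigma> 3 = rend (Lmax A)" by blast
    then show "(\<exists>A. Lset A \<and> lend A = \<sigma> 0 \<and> rend A = \<sigma> 1) \<and> \<sigma> 2 = KM (\<sigma> 0) (\<sigma> 1) \<and> \<sigma> 3 = KM (\<sigma> 0) (\<sigma> 1)"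
      using e[OF A(1)] by auto
  qed
  also have "\<dots> \<longleftrightarrow> map \<sigma> [0..<2*2] \<in> {[lend A, rend A] @ [lend (Lmax A), rend (Lmax A)] | A::'a set. Lset A}"
    by (simp add: m4)
  finally show "wsat \<sigma> MaxF \<longleftrightarrow> map \<sigma> [0..<2*2] \<in> {[lend A, rend A] @ [lend (Lmax A), rend (Lmax A)] | A::'a set. Lset A}" .
qed

lemma d_lend: "W_definable (2*2) {[lend A, rend A] @ [lend (lend A), rend (lend A)] | A::'a::{dense_linorder,no_top,order_bot} set. Lset A}"
proof (rule W_defI[where \<phi> = "WConj (DomF 0 1) (WConj (WEq (WVar 2) (WVar 0)) (WEq (WVar 3) (WVar 0)))"])
  have e: "lend (lend A) = lend A" "rend (lend A) = lend A" if "Lset A" for A :: "'a set"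
    using lend_fin rend_fin Lset_finite[OF that] by auto
  show "{[lend A, rend A] @ [lend (lend A), rend (lend A)] | A::'a set. Lset A} \<subseteq> {xs. length xs = 2*2 \<and> (\<forall>X\<in>set xs. finite X)}"
    using Lset_finite e by fastforce
  fix \<sigma> :: "nat \<Rightarrow> 'a set" assume fin: "\<forall>i. finite (\<sigma> i)"
  have "wsat \<sigma> (WConj (DomF 0 1) (WConj (WEq (WVar 2) (WVar 0)) (WEq (WVar 3) (WVar 0)))) \<longleftrightarrow>
     (\<exists>A. Lset A \<and> lend A = \<sigma> 0 \<and> rend A = \<sigma> 1) \<and> \<sigma> 2 = \<sigma> 0 \<and> \<sigma> 3 = \<sigma> 0"
    using fin by (simp add: DomF_sem DomS_iff)
  also have "\<dots> \<longleftrightarrow> (\<exists>A. \<sigma> 0 = lend A \<and> \<sigma> 1 = rend A \<and> \<sigma> 2 = lend (lend A) \<and> \<sigma> 3 = rend (lend A) \<and> Lset A)"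
  proof
    assume h: "(\<exists>A. Lset A \<and> lend A = \<sigma> 0 \<and> rend A = \<sigma> 1) \<and> \<sigma> 2 = \<sigma> 0 \<and> \<sigma> 3 = \<sigma> 0"
    then obtain A where A: "Lset A" "lend A = \<sigma> 0" "rend A = \<sigma> 1" by blast
    show "\<exists>A. \<sigma> 0 = lend A \<and> \<sigma> 1 = rend A \<and> \<sigma> 2 = lend (lend A) \<and> \<sigma> 3 = rend (lend A) \<and> Lset A"
      using A h e[OF A(1)] by (intro exI[of _ A]) simp
  next
    assume "\<exists>A. \<sigma> 0 = lend A \<and> \<sigma> 1 = rend A \<and> \<sigma> 2 = lend (lend A) \<and> \<sigma> 3 = rend (lend A) \<and> Lset A"
    then obtain A where A: "Lset A" "lend A = \<sigma> 0" "rend A = \<sigma> 1" "\<sigma> 2 = lend (lend A)" "\<sigma> 3 = rend (lend A)" by blast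
    then show "(\<exists>A. Lset A \<and> lend A = \<sigma> 0 \<and> rend A = \<sigma> 1) \<and> \<sigma> 2 = \<sigma> 0 \<and> \<sigma> 3 = \<sigma> 0"
      using e[OF A(1)] by auto
  qed
  also have "\<dots> \<longleftrightarrow> map \<sigma> [0..<2*2] \<in> {[lend A, rend A] @ [lend (lend A), rend (lend A)] | A::'a set. Lset A}"
    by (simp add: m4)
  finally show "wsat \<sigma> (WConj (DomF 0 1) (WConj (WEq (WVar 2) (WVar 0)) (WEq (WVar 3) (WVar 0)))) \<longleftrightarrow>
     map \<sigma> [0..<2*2] \<in> {[lend A, rend A] @ [lend (lend A), rend (lend A)] | A::'a set. Lset A}" .
qed

lemma d_rend: "W_definable (2*2) {[lend A, rend A] @ [lend (rend A), rend (rend A)] | A::'a::{dense_linorder,no_top,order_bot} set. Lset A}"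
proof (rule W_defI[where \<phi> = "WConj (DomF 0 1) (WConj (WEq (WVar 2) (WVar 1)) (WEq (WVar 3) (WVar 1)))"])
  have e: "lend (rend A) = rend A" "rend (rend A) = rend A" if "Lset A" for A :: "'a set"
    using lend_fin rend_fin Lset_finite[OF that] by auto
  show "{[lend A, rend A] @ [lend (rend A), rend (rend A)] | A::'a set. Lset A} \<subseteq> {xs. length xs = 2*2 \<and> (\<forall>X\<in>set xs. finite X)}"
    using Lset_finite e by fastforce
  fix \<sigma> :: "nat \<Rightarrow> 'a set" assume fin: "\<forall>i. finite (\<sigma> i)"
  have "wsat \<sigma> (WConj (DomF 0 1) (WConj (WEq (WVar 2) (WVar 1)) (WEq (WVar 3) (WVar 1)))) \<longleftrightarrow>
     (\<exists>A. Lset A \<and> lend A = \<sigma> 0 \<and> rend A = \<sigma> 1) \<and> \<sigma> 2 = \<sigma> 1 \<and> \<sigma> 3 = \<sigma> 1"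
    using fin by (simp add: DomF_sem DomS_iff)
  also have "\<dots> \<longleftrightarrow> (\<exists>A. \<sigma> 0 = lend A \<and> \<sigma> 1 = rend A \<and> \<sigma> 2 = lend (rend A) \<and> \<sigma> 3 = rend (rend A) \<and> Lset A)"
  proof
    assume h: "(\<exists>A. Lset A \<and> lend A = \<sigma> 0 \<and> rend A = \<sigma> 1) \<and> \<sigma> 2 = \<sigma> 1 \<and> \<sigma> 3 = \<sigma> 1"
    then obtain A where A: "Lset A" "lend A = \<sigma> 0" "rend A = \<sigma> 1" by blast
    show "\<exists>A. \<sigma> 0 = lend A \<and> \<sigma> 1 = rend A \<and> \<sigma> 2 = lend (rend A) \<and> \<sigma> 3 = rend (rend A) \<and> Lset A"
      using A h e[OF A(1)] by (intro exI[of _ A]) simp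
  next
    assume "\<exists>A. \<sigma> 0 = lend A \<and> \<sigma> 1 = rend A \<and> \<sigma> 2 = lend (rend A) \<and> \<sigma> 3 = rend (rend A) \<and> Lset A"
    then obtain A where A: "Lset A" "lend A = \<sigma> 0" "rend A = \<sigma> 1" "\<sigma> 2 = lend (rend A)" "\<sigma> 3 = rend (rend A)" by blast
    then show "(\<exists>A. Lset A \<and> lend A = \<sigma> 0 \<and> rend A = \<sigma> 1) \<and> \<sigma> 2 = \<sigma> 1 \<and> \<sigma> 3 = \<sigma> 1"
      using e[OF A(1)] by auto
  qed
  also have "\<dots> \<longleftrightarrow> map \<sigma> [0..<2*2] \<in> {[lend A, rend A] @ [lend (rend A), rend (rend A)] | A::'a set. Lset A}"
    by (simp add: m4)
  finally show "wsat \<sigma> (WConj (DomF 0 1) (WConj (WEq (WVar 2) (WVar 1)) (WEq (WVar 3) (WVar 1)))) \<longleftrightarrow>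
     map \<sigma> [0..<2*2] \<in> {[lend A, rend A] @ [lend (rend A), rend (rend A)] | A::'a set. Lset A}" .
qed

theorem theorem6p4:
  shows "interprets_L_in_W
           (\<lambda>A::'a::{dense_linorder, no_top, order_bot} set. [lend A, rend A]) 2"
  unfolding interprets_L_in_W_def
  by (intro conjI) (simp, fact d_dom, fact d_eq, fact d_un, fact d_int, fact d_empty, fact d_bot,
     fact d_min, fact d_max, fact d_lend, fact d_rend)

end
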